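(* Let $k\ge2$ be an integer. The closure of $\bar\Gamma(2)_k$ in $\mathrm{PSL}_2(\hat{\mathbb{Z}}_{\mathrm{odd}})$ is equal to $\hat D_{\mathrm{odd}}$.
   Context: $\bar\Gamma(2)=\Gamma(2)/\{\pm1\}\subset\mathrm{PSL}_2(\mathbb{Z})$; its lower central series is $\bar\Gamma(2)_1=\bar\Gamma(2)$, $\bar\Gamma(2)_{k+1}=[\bar\Gamma(2)_k,\bar\Gamma(2)]$. Let $\hat{\mathbb{Z}}_{\mathrm{odd}}=\varprojlim_{n\text{ odd}}\mathbb{Z}/n\mathbb{Z}\cong\prod_{p\ne2}\mathbb{Z}_p$, and view $\mathrm{PSL}_2(\mathbb{Z})\subset\mathrm{PSL}_2(\hat{\mathbb{Z}}_{\mathrm{odd}})$ with its profinite topology. $D_3\subset\mathrm{PSL}_2(\mathbb{Z}/3\mathbb{Z})$ is the index-$3$ Klein four-subgroup consisting of the classes of $\pm I$, $\pm\begin{pmatrix}0&-1\\1&0\end{pmatrix}$, $\pm\begin{pmatrix}-1&1\\1&1\end{pmatrix}$, $\pm\begin{pmatrix}1&1\\1&-1\end{pmatrix}$, and $\hat D_{\mathrm{odd}}$ is its inverse image in $\mathrm{PSL}_2(\hat{\mathbb{Z}}_{\mathrm{odd}})$ under reduction modulo $3$. *)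

theory Defs
  imports "HOL-Analysis.Analysis" "HOL-Algebra.Coset" "HOL-Algebra.Generated_Groups"
begin

type_synonym mat2 = "int^2^2"

definition mk2 :: "int \<Rightarrow> int \<Rightarrow> int \<Rightarrow> int \<Rightarrow> mat2" where
  "mk2 a b c d = (\<chi> i j. if i = 1 then (if j = 1 then a else b) else (if j = 1 then c else d))"

definition SL2Z :: "mat2 set" where
  "SL2Z = {A. det A = 1}"

definition SL2Z_grp :: "mat2 monoid" where
  "SL2Z_grp = \<lparr>carrier = SL2Z, mult = (**), one = mat 1\<rparr>"

definition PSL2Z :: "mat2 set monoid" where
  "PSL2Z = SL2Z_grp Mod {mat 1, - mat 1}"

definition mat_cong :: "nat \<Rightarrow> mat2 \<Rightarrow> mat2 \<Rightarrow> bool" where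
  "mat_cong n A B \<longleftrightarrow> (\<forall>i j. (A$i$j) mod int n = (B$i$j) mod int n)"

definition Gamma2 :: "mat2 set" where
  "Gamma2 = {A \<in> SL2Z. mat_cong 2 A (mat 1)}"

definition Gamma2bar :: "mat2 set set" where
  "Gamma2bar = (\<lambda>A. {mat 1, - mat 1} #>\<^bsub>SL2Z_grp\<^esub> A) ` Gamma2"

definition comm_subgroup :: "('a, 'b) monoid_scheme \<Rightarrow> 'a set \<Rightarrow> 'a set \<Rightarrow> 'a set" where
  "comm_subgroup G A B = generate G (\<Union>a\<in>A. \<Union>b\<in>B. {a \<otimes>\<^bsub>G\<^esub> b \<otimes>\<^bsub>G\<^esub> inv\<^bsub>G\<^esub> a \<otimes>\<^bsub>G\<^esub> inv\<^bsub>G\<^esub> b})"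

text \<open>Lower central series, indexed from 1: lcs 1 = \bar\Gamma(2), lcs (k+1) = [lcs k, \bar\Gamma(2)].
  (The value at 0 is an unused convention.)\<close>
fun Gamma2bar_lcs :: "nat \<Rightarrow> mat2 set set" where
  "Gamma2bar_lcs 0 = Gamma2bar"
| "Gamma2bar_lcs (Suc 0) = Gamma2bar"
| "Gamma2bar_lcs (Suc (Suc k)) = comm_subgroup PSL2Z (Gamma2bar_lcs (Suc k)) Gamma2bar"

text \<open>Elements of SL_2(\hat Z_odd), \hat Z_odd = lim_{n odd} Z/nZ: compatible families
  g n (n odd) of integer matrices, representing the reduction mod n, with det = 1 mod n.
  The values at even n are irrelevant.  An element of PSL_2(\hat Z_odd) is the class of such g
  modulo +-1.\<close>
definition SL2_Zodd :: "(nat \<Rightarrow> mat2) set" where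
  "SL2_Zodd = {g. (\<forall>m n. odd m \<and> odd n \<and> m dvd n \<longrightarrow> mat_cong m (g n) (g m))
                 \<and> (\<forall>n. odd n \<longrightarrow> det (g n) mod int n = 1 mod int n)}"

text \<open>Closure in PSL_2(\hat Z_odd) of a subset H of PSL_2(Z) (a set of classes {A,-A}):
  the class of g lies in the closure iff every basic open neighbourhood of it (image of g times
  the kernel of reduction mod n, n odd) meets the image of H.\<close>
definition in_closure_PSL2_Zodd :: "mat2 set set \<Rightarrow> (nat \<Rightarrow> mat2) \<Rightarrow> bool" where
  "in_closure_PSL2_Zodd H g \<longleftrightarrow> (\<forall>n. odd n \<longrightarrow> (\<exists>C\<in>H. \<exists>A\<in>C. mat_cong n A (g n)))"

text \<open>The Klein four-subgroup D_3 of PSL_2(Z/3Z), given by representatives.\<close>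
definition D3_reps :: "mat2 set" where
  "D3_reps = {mk2 1 0 0 1, mk2 0 (-1) 1 0, mk2 (-1) 1 1 1, mk2 1 1 1 (-1)}"

text \<open>The class of g lies in \hat D_odd iff its reduction mod 3 lies in D_3.\<close>
definition in_Dhat_odd :: "(nat \<Rightarrow> mat2) \<Rightarrow> bool" where
  "in_Dhat_odd g \<longleftrightarrow> (\<exists>D\<in>D3_reps. mat_cong 3 (g 3) D \<or> mat_cong 3 (g 3) (- D))"

end

theory Submission
  imports Defs "HOL-Computational_Algebra.Primes"
begin

lemma two_ne_one_2: "(2::2) \<noteq> 1" by simp

lemma mk2_nth [simp]:
  "mk2 a b c d $ 1 $ 1 = a" "mk2 a b c d $ 1 $ 2 = b"
  "mk2 a b c d $ 2 $ 1 = c" "mk2 a b c d $ 2 $ 2 = d"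
  by (simp_all add: mk2_def)

lemma mat2_eta: "A = mk2 (A$1$1) (A$1$2) (A$2$1) (A$2$2)"
  by (simp add: vec_eq_iff forall_2)

lemma mk2_eq_iff [simp]: "mk2 a b c d = mk2 a' b' c' d' \<longleftrightarrow> a = a' \<and> b = b' \<and> c = c' \<and> d = d'"
  by (metis mk2_nth)

lemma mk2_mult [simp]:
  "mk2 a b c d ** mk2 e f g h = mk2 (a*e+b*g) (a*f+b*h) (c*e+d*g) (c*f+d*h)"
  by (simp add: vec_eq_iff forall_2 matrix_matrix_mult_def sum_2)

lemma det_mk2 [simp]: "det (mk2 a b c d) = a*d - b*c"
  by (simp add: det_2)

lemma mat1_mk2: "mat 1 = mk2 1 0 0 1"
  by (simp add: vec_eq_iff forall_2 mat_def)

lemma neg_mk2 [simp]: "- mk2 a b c d = mk2 (-a) (-b) (-c) (-d)"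
  by (simp add: vec_eq_iff forall_2)

lemma mat_cong_mk2 [simp]:
  "mat_cong n (mk2 a b c d) (mk2 a' b' c' d') \<longleftrightarrow>
     a mod int n = a' mod int n \<and> b mod int n = b' mod int n \<and> c mod int n = c' mod int n \<and> d mod int n = d' mod int n"
  by (simp add: mat_cong_def forall_2)

definition adj2 :: "mat2 \<Rightarrow> mat2" where
  "adj2 A = mk2 (A$2$2) (-(A$1$2)) (-(A$2$1)) (A$1$1)"

lemma adj2_mk2 [simp]: "adj2 (mk2 a b c d) = mk2 d (-b) (-c) a"
  by (simp add: adj2_def)

lemma mk2_exhaust: "(\<And>a b c d. A = mk2 a b c d \<Longrightarrow> P) \<Longrightarrow> P"
  using mat2_eta by blast

lemma SL2Z_mk2: "mk2 a b c d \<in> SL2Z \<longleftrightarrow> a*d - b*c = 1"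
  by (simp add: SL2Z_def)

lemma SL2Z_mult: "A \<in> SL2Z \<Longrightarrow> B \<in> SL2Z \<Longrightarrow> A ** B \<in> SL2Z"
  by (simp add: SL2Z_def det_mul)

lemma SL2Z_adj: "A \<in> SL2Z \<Longrightarrow> adj2 A \<in> SL2Z"
  by (cases A rule: mk2_exhaust) (simp add: SL2Z_def algebra_simps)

lemma SL2Z_adj_right: "A \<in> SL2Z \<Longrightarrow> A ** adj2 A = mat 1"
  by (cases A rule: mk2_exhaust) (simp add: SL2Z_def mat1_mk2 algebra_simps)

lemma SL2Z_adj_left: "A \<in> SL2Z \<Longrightarrow> adj2 A ** A = mat 1"
  by (cases A rule: mk2_exhaust) (simp add: SL2Z_def mat1_mk2 algebra_simps)

lemma SL2Z_one: "mat 1 \<in> SL2Z"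
  by (simp add: SL2Z_def)

lemma SL2Z_neg: "A \<in> SL2Z \<Longrightarrow> - A \<in> SL2Z"
  by (cases A rule: mk2_exhaust) (simp add: SL2Z_def)

lemma SL2Z_group: "group SL2Z_grp"
proof (rule groupI)
  show "\<And>x y. x \<in> carrier SL2Z_grp \<Longrightarrow> y \<in> carrier SL2Z_grp \<Longrightarrow> x \<otimes>\<^bsub>SL2Z_grp\<^esub> y \<in> carrier SL2Z_grp"
    by (simp add: SL2Z_grp_def SL2Z_mult)
  show "\<one>\<^bsub>SL2Z_grp\<^esub> \<in> carrier SL2Z_grp" by (simp add: SL2Z_grp_def SL2Z_one)
  show "\<And>x y z. x \<in> carrier SL2Z_grp \<Longrightarrow> y \<in> carrier SL2Z_grp \<Longrightarrow> z \<in> carrier SL2Z_grp \<Longrightarrow>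
           x \<otimes>\<^bsub>SL2Z_grp\<^esub> y \<otimes>\<^bsub>SL2Z_grp\<^esub> z = x \<otimes>\<^bsub>SL2Z_grp\<^esub> (y \<otimes>\<^bsub>SL2Z_grp\<^esub> z)"
    by (simp add: SL2Z_grp_def matrix_mul_assoc)
  show "\<And>x. x \<in> carrier SL2Z_grp \<Longrightarrow> \<one>\<^bsub>SL2Z_grp\<^esub> \<otimes>\<^bsub>SL2Z_grp\<^esub> x = x"
    by (simp add: SL2Z_grp_def)
  show "\<And>x. x \<in> carrier SL2Z_grp \<Longrightarrow> \<exists>y\<in>carrier SL2Z_grp. y \<otimes>\<^bsub>SL2Z_grp\<^esub> x = \<one>\<^bsub>SL2Z_grp\<^esub>"
    by (auto simp add: SL2Z_grp_def intro!: bexI[of _ "adj2 _"] SL2Z_adj SL2Z_adj_left)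
qed

interpretation SL: group SL2Z_grp by (rule SL2Z_group)

lemma SL_carrier [simp]: "carrier SL2Z_grp = SL2Z" by (simp add: SL2Z_grp_def)
lemma SL_mult [simp]: "x \<otimes>\<^bsub>SL2Z_grp\<^esub> y = x ** y" by (simp add: SL2Z_grp_def)
lemma SL_one [simp]: "\<one>\<^bsub>SL2Z_grp\<^esub> = mat 1" by (simp add: SL2Z_grp_def)

lemma SL_inv [simp]: "A \<in> SL2Z \<Longrightarrow> inv\<^bsub>SL2Z_grp\<^esub> A = adj2 A"
  by (rule SL.inv_equality) (auto simp: SL2Z_adj SL2Z_adj_left)

lemma neg_mult_left: "(- (A::mat2)) ** (B::mat2) = - (A ** B)"
  by (cases A rule: mk2_exhaust; cases B rule: mk2_exhaust) simp

lemma neg_mult_right: "(A::mat2) ** (- (B::mat2)) = - (A ** B)"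
  by (cases A rule: mk2_exhaust; cases B rule: mk2_exhaust) simp

definition Nz :: "mat2 set" where "Nz = {mat 1, - mat 1}"

definition cos2 :: "mat2 \<Rightarrow> mat2 set" where "cos2 A = {A, - A}"

lemma rcos_eq: "Nz #>\<^bsub>SL2Z_grp\<^esub> A = cos2 A"
  by (auto simp: r_coset_def Nz_def cos2_def neg_mult_left)

lemma Nz_normal: "Nz \<lhd> SL2Z_grp"
proof (rule SL.normalI)
  show "subgroup Nz SL2Z_grp"
    by (rule SL.subgroupI) (auto simp: Nz_def SL2Z_one SL2Z_neg neg_mult_left neg_mult_right
        adj2_def mat1_mk2 SL2Z_mk2)
  show "\<forall>x\<in>carrier SL2Z_grp. Nz #>\<^bsub>SL2Z_grp\<^esub> x = x <#\<^bsub>SL2Z_grp\<^esub> Nz"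
    by (auto simp: r_coset_def l_coset_def Nz_def neg_mult_left neg_mult_right)
qed

interpretation NZ: normal Nz SL2Z_grp by (rule Nz_normal)

lemma PSL2Z_eq: "PSL2Z = SL2Z_grp Mod Nz" by (simp add: PSL2Z_def Nz_def)

lemma PSL_group: "group PSL2Z"
  unfolding PSL2Z_eq by (rule NZ.factorgroup_is_group)

interpretation PSL: group PSL2Z by (rule PSL_group)

lemma PSL_carrier: "carrier PSL2Z = cos2 ` SL2Z"
  by (simp add: PSL2Z_eq carrier_FactGroup rcos_eq)

lemma cos2_in_PSL: "A \<in> SL2Z \<Longrightarrow> cos2 A \<in> carrier PSL2Z"
  by (simp add: PSL_carrier)

lemma PSL_mult: "A \<in> SL2Z \<Longrightarrow> B \<in> SL2Z \<Longrightarrow> cos2 A \<otimes>\<^bsub>PSL2Z\<^esub> cos2 B = cos2 (A ** B)"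
  using NZ.rcos_sum[of A B] by (simp add: PSL2Z_eq rcos_eq)

lemma PSL_one: "\<one>\<^bsub>PSL2Z\<^esub> = cos2 (mat 1)"
  by (simp add: PSL2Z_eq Nz_def cos2_def)

lemma PSL_inv: "A \<in> SL2Z \<Longrightarrow> inv\<^bsub>PSL2Z\<^esub> (cos2 A) = cos2 (adj2 A)"
  by (rule PSL.inv_equality) (auto simp: PSL_mult SL2Z_adj SL2Z_adj_left PSL_one cos2_in_PSL)

lemma cos2_neg: "cos2 (- A) = cos2 A" by (auto simp: cos2_def)

lemma PSL_elem: "C \<in> carrier PSL2Z \<Longrightarrow> A \<in> C \<Longrightarrow> C = cos2 A \<and> A \<in> SL2Z"
  by (auto simp: PSL_carrier cos2_def SL2Z_neg)

lemma cos2_self: "A \<in> cos2 A" by (simp add: cos2_def)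

lemma Gamma2bar_sub: "Gamma2bar \<subseteq> carrier PSL2Z"
  by (auto simp: Gamma2bar_def rcos_eq[unfolded Nz_def] Gamma2_def cos2_in_PSL)

lemma Gamma2bar_cos: "B \<in> Gamma2 \<Longrightarrow> cos2 B \<in> Gamma2bar"
  using rcos_eq[unfolded Nz_def] by (auto simp: Gamma2bar_def)

lemma lcs_sub: "Gamma2bar_lcs k \<subseteq> carrier PSL2Z"
proof (induction k rule: Gamma2bar_lcs.induct)
  case (3 k)
  then show ?case
    unfolding Gamma2bar_lcs.simps comm_subgroup_def
    by (intro PSL.generate_incl) (use Gamma2bar_sub in blast)
qed (auto simp: Gamma2bar_sub)

lemma lcs_subgroup: "k \<ge> 2 \<Longrightarrow> subgroup (Gamma2bar_lcs k) PSL2Z"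
proof -
  assume "k \<ge> 2"
  then obtain j where k: "k = Suc (Suc j)" by (metis add_2_eq_Suc le_Suc_ex)
  show ?thesis unfolding k Gamma2bar_lcs.simps comm_subgroup_def
    by (intro PSL.generate_is_subgroup) (use Gamma2bar_sub lcs_sub in blast)
qed

definition G3 :: "(int \<times> int \<times> int \<times> int) list" where
  "G3 = [(0,1,2,0), (0,1,2,1), (0,1,2,2), (0,2,1,0), (0,2,1,1), (0,2,1,2), (1,0,0,1), (1,0,1,1), (1,0,2,1), (1,1,0,1), (1,1,1,2), (1,1,2,0), (1,2,0,1), (1,2,1,0), (1,2,2,2), (2,0,0,2), (2,0,1,2), (2,0,2,2), (2,1,0,2), (2,1,1,1), (2,1,2,0), (2,2,0,2), (2,2,1,0), (2,2,2,1)]"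

definition chi4 :: "int \<Rightarrow> int \<Rightarrow> int \<Rightarrow> int \<Rightarrow> int" where
  "chi4 a b c d = (a*b*(1 - c^2) + c*(a+d)) mod 3"

lemma chi4_mod: "chi4 a b c d = chi4 (a mod 3) (b mod 3) (c mod 3) (d mod 3)"
  unfolding chi4_def by (intro mod_add_cong mod_mult_cong mod_diff_cong) (simp_all add: power_mod)

lemma res3: "(x::int) mod 3 = 0 \<or> x mod 3 = 1 \<or> x mod 3 = 2" by arith

lemma G3_mem:
  assumes "(a*d - b*c) mod 3 = 1"
  shows "(a mod 3, b mod 3, c mod 3, d mod 3) \<in> set G3"
proof -
  have "(a*d - b*c) mod 3 = ((a mod 3)*(d mod 3) - (b mod 3)*(c mod 3)) mod 3"
    by (intro mod_add_cong mod_mult_cong mod_diff_cong) simp_all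
  with assms have h: "((a mod 3)*(d mod 3) - (b mod 3)*(c mod 3)) mod 3 = 1" by simp
  show ?thesis
    using res3[of a] res3[of b] res3[of c] res3[of d] h
    by (elim disjE) (simp_all add: G3_def)
qed

lemma G3_hom:
  "\<forall>x\<in>set G3. \<forall>y\<in>set G3. case x of (a,b,c,d) \<Rightarrow> case y of (e,f,g,h) \<Rightarrow>
     chi4 (a*e+b*g) (a*f+b*h) (c*e+d*g) (c*f+d*h) = (chi4 a b c d + chi4 e f g h) mod 3"
  by code_simp

definition chi :: "mat2 \<Rightarrow> int" where
  "chi A = chi4 (A$1$1) (A$1$2) (A$2$1) (A$2$2)"

lemma chi_mk2 [simp]: "chi (mk2 a b c d) = chi4 a b c d"
  by (simp add: chi_def)

lemma chi4_cong:
  "a mod 3 = a2 mod 3 \<Longrightarrow> b mod 3 = b2 mod 3 \<Longrightarrow> c mod 3 = c2 mod 3 \<Longrightarrow> d mod 3 = d2 mod 3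
   \<Longrightarrow> chi4 a b c d = chi4 a2 b2 c2 d2"
  by (metis chi4_mod)

lemma chi4_hom:
  assumes "(a*d - b*c) mod 3 = 1" "(e*h - f*g) mod 3 = 1"
  shows "chi4 (a*e+b*g) (a*f+b*h) (c*e+d*g) (c*f+d*h) = (chi4 a b c d + chi4 e f g h) mod 3"
proof -
  define a' where "a' = a mod 3"
  define b' where "b' = b mod 3"
  define c' where "c' = c mod 3"
  define d' where "d' = d mod 3"
  define e' where "e' = e mod 3"
  define f' where "f' = f mod 3"
  define g' where "g' = g mod 3"
  define h' where "h' = h mod 3"
  have x: "(a', b', c', d') \<in> set G3" unfolding a'_def b'_def c'_def d'_def by (rule G3_mem[OF assms(1)])
  have y: "(e', f', g', h') \<in> set G3" unfolding e'_def f'_def g'_def h'_def by (rule G3_mem[OF assms(2)])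
  have m: "a mod 3 = a' mod 3" "b mod 3 = b' mod 3" "c mod 3 = c' mod 3" "d mod 3 = d' mod 3"
      "e mod 3 = e' mod 3" "f mod 3 = f' mod 3" "g mod 3 = g' mod 3" "h mod 3 = h' mod 3"
    by (simp_all add: a'_def b'_def c'_def d'_def e'_def f'_def g'_def h'_def)
  have "chi4 (a*e+b*g) (a*f+b*h) (c*e+d*g) (c*f+d*h) = chi4 (a'*e'+b'*g') (a'*f'+b'*h') (c'*e'+d'*g') (c'*f'+d'*h')"
    by (intro chi4_cong mod_add_cong mod_mult_cong m)
  also have "\<dots> = (chi4 a' b' c' d' + chi4 e' f' g' h') mod 3"
    using bspec[OF bspec[OF G3_hom x] y] by (simp only: prod.case)
  also have "chi4 a' b' c' d' = chi4 a b c d" by (intro chi4_cong) (simp_all add: m)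
  also have "chi4 e' f' g' h' = chi4 e f g h" by (intro chi4_cong) (simp_all add: m)
  finally show ?thesis .
qed

lemma chi_mult:
  assumes "det A mod 3 = 1" "det B mod 3 = 1"
  shows "chi (A ** B) = (chi A + chi B) mod 3"
  using assms by (cases A rule: mk2_exhaust; cases B rule: mk2_exhaust) (simp add: chi4_hom)

lemma SL2Z_det3: "A \<in> SL2Z \<Longrightarrow> det A mod 3 = 1"
  by (simp add: SL2Z_def)

lemma chi_SL_mult: "A \<in> SL2Z \<Longrightarrow> B \<in> SL2Z \<Longrightarrow> chi (A ** B) = (chi A + chi B) mod 3"
  by (simp add: chi_mult SL2Z_det3)

lemma chi_range: "0 \<le> chi A" "chi A < 3"
  by (simp_all add: chi_def chi4_def)

lemma chi_one: "chi (mat 1) = 0"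
  by (simp add: mat1_mk2 chi4_def)

lemma chi_neg: "chi (- A) = chi A"
  by (cases A rule: mk2_exhaust) (simp add: chi4_def algebra_simps power2_eq_square)

lemma chi_adj: "A \<in> SL2Z \<Longrightarrow> chi (adj2 A) = (- chi A) mod 3"
proof -
  assume A: "A \<in> SL2Z"
  have "chi (A ** adj2 A) = (chi A + chi (adj2 A)) mod 3"
    by (rule chi_SL_mult[OF A SL2Z_adj[OF A]])
  then have "(chi A + chi (adj2 A)) mod 3 = 0" by (simp add: SL2Z_adj_right[OF A] chi_one)
  then show ?thesis using chi_range[of A] chi_range[of "adj2 A"] by presburger
qed

lemma chi_comm: "A \<in> SL2Z \<Longrightarrow> B \<in> SL2Z \<Longrightarrow> chi (A ** B ** adj2 A ** adj2 B) = 0"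
proof -
  assume A: "A \<in> SL2Z" and B: "B \<in> SL2Z"
  note S = SL2Z_mult SL2Z_adj A B
  have "chi (A ** B ** adj2 A ** adj2 B) = (((chi A + chi B) mod 3 + (- chi A) mod 3) mod 3 + (- chi B) mod 3) mod 3"
    by (simp add: chi_SL_mult S chi_adj)
  then show ?thesis by presburger
qed

lemma D3_iff:
  assumes "(a*d - b*c) mod 3 = 1"
  shows "chi4 a b c d = 0 \<longleftrightarrow> (\<exists>D\<in>D3_reps. mat_cong 3 (mk2 a b c d) D \<or> mat_cong 3 (mk2 a b c d) (- D))"
proof -
  have m: "(a mod 3, b mod 3, c mod 3, d mod 3) \<in> set G3" by (rule G3_mem[OF assms])
  have e: "chi4 a b c d = chi4 (a mod 3) (b mod 3) (c mod 3) (d mod 3)" by (rule chi4_mod)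
  show ?thesis
    unfolding e D3_reps_def using m
    by (simp add: G3_def) (elim disjE; simp add: chi4_def)
qed

lemma mat_cong_refl [simp]: "mat_cong n A A" by (simp add: mat_cong_def)
lemma mat_cong_sym: "mat_cong n A B \<Longrightarrow> mat_cong n B A" by (simp add: mat_cong_def)
lemma mat_cong_trans: "mat_cong n A B \<Longrightarrow> mat_cong n B C \<Longrightarrow> mat_cong n A C" by (simp add: mat_cong_def)

lemma mat_cong_mult: "mat_cong n A A' \<Longrightarrow> mat_cong n B B' \<Longrightarrow> mat_cong n (A ** B) (A' ** B')"
  by (cases A rule: mk2_exhaust; cases B rule: mk2_exhaust; cases A' rule: mk2_exhaust; cases B' rule: mk2_exhaust)
     (auto intro!: mod_add_cong mod_mult_cong)

lemma mat_cong_adj: "mat_cong n A A' \<Longrightarrow> mat_cong n (adj2 A) (adj2 A')"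
  by (cases A rule: mk2_exhaust; cases A' rule: mk2_exhaust) (auto intro!: mod_minus_cong)

lemma mat_cong_neg: "mat_cong n A A' \<Longrightarrow> mat_cong n (- A) (- A')"
  by (cases A rule: mk2_exhaust; cases A' rule: mk2_exhaust) (auto intro!: mod_minus_cong)

lemma mat_cong_dvd: "m dvd n \<Longrightarrow> mat_cong n A B \<Longrightarrow> mat_cong m A B"
  unfolding mat_cong_def
proof (intro allI)
  fix i j assume "m dvd n" "\<forall>i j. A $ i $ j mod int n = B $ i $ j mod int n"
  then have "A $ i $ j mod int n = B $ i $ j mod int n" "int m dvd int n" by auto
  then have "A $ i $ j mod int n mod int m = B $ i $ j mod int n mod int m" by simp
  then show "A $ i $ j mod int m = B $ i $ j mod int m" using \<open>int m dvd int n\<close> by (simp only: mod_mod_cancel)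
qed

lemma mat_cong_det: "mat_cong n A B \<Longrightarrow> det A mod int n = det B mod int n"
  by (cases A rule: mk2_exhaust; cases B rule: mk2_exhaust) (auto intro!: mod_diff_cong mod_mult_cong)

lemma mat_cong_chi: "mat_cong 3 A B \<Longrightarrow> chi A = chi B"
  by (cases A rule: mk2_exhaust; cases B rule: mk2_exhaust) (auto intro!: chi4_cong)

definition U :: "int \<Rightarrow> mat2" where "U m = mk2 1 m 0 1"
definition L :: "int \<Rightarrow> mat2" where "L m = mk2 1 0 m 1"

lemma U_SL [simp]: "U m \<in> SL2Z" by (simp add: U_def SL2Z_mk2)
lemma L_SL [simp]: "L m \<in> SL2Z" by (simp add: L_def SL2Z_mk2)

lemma sl2_words:
  assumes P1: "mat 1 \<in> P"
    and PU1: "\<And>M. M \<in> P \<Longrightarrow> M ** U 1 \<in> P" and PU2: "\<And>M. M \<in> P \<Longrightarrow> M ** U (-1) \<in> P"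
    and PL1: "\<And>M. M \<in> P \<Longrightarrow> M ** L 1 \<in> P" and PL2: "\<And>M. M \<in> P \<Longrightarrow> M ** L (-1) \<in> P"
    and M: "M \<in> SL2Z"
  shows "M \<in> P"
proof -
  have Um: "X ** U m \<in> P" if "X \<in> P" for X m
  proof (induction m rule: int_induct[where k=0])
    case base
    have "X ** U 0 = X" by (cases X rule: mk2_exhaust) (simp add: U_def)
    then show ?case using that by simp
  next
    case (step1 i)
    have "X ** U (i+1) = (X ** U i) ** U 1" by (cases X rule: mk2_exhaust) (simp add: U_def algebra_simps)
    then show ?case using PU1[OF step1(2)] by simp
  next
    case (step2 i)
    have "X ** U (i-1) = (X ** U i) ** U (-1)" by (cases X rule: mk2_exhaust) (simp add: U_def algebra_simps)
    then show ?case using PU2[OF step2(2)] by simp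
  qed
  have Lm: "X ** L m \<in> P" if "X \<in> P" for X m
  proof (induction m rule: int_induct[where k=0])
    case base
    have "X ** L 0 = X" by (cases X rule: mk2_exhaust) (simp add: L_def)
    then show ?case using that by simp
  next
    case (step1 i)
    have "X ** L (i+1) = (X ** L i) ** L 1" by (cases X rule: mk2_exhaust) (simp add: L_def algebra_simps)
    then show ?case using PL1[OF step1(2)] by simp
  next
    case (step2 i)
    have "X ** L (i-1) = (X ** L i) ** L (-1)" by (cases X rule: mk2_exhaust) (simp add: L_def algebra_simps)
    then show ?case using PL2[OF step2(2)] by simp
  qed
  have bk: "X \<in> P" if "X ** U m ** L m' \<in> P" for X m m'
  proof -
    have "X = X ** U m ** L m' ** L (-m') ** U (-m)"
      by (cases X rule: mk2_exhaust) (simp add: U_def L_def algebra_simps)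
    then show ?thesis using Um[OF Lm[OF that]] by metis
  qed
  have main: "\<forall>X. X \<in> SL2Z \<longrightarrow> nat \<bar>X$2$1\<bar> = n \<longrightarrow> X \<in> P" for n
  proof (induction n rule: less_induct)
    case (less n)
    show ?case
    proof (intro allI impI)
      fix X assume X: "X \<in> SL2Z" and n: "nat \<bar>X$2$1\<bar> = n"
      obtain a b c d where Xe: "X = mk2 a b c d" by (rule mk2_exhaust)
      have det: "a*d - b*c = 1" using X Xe by (simp add: SL2Z_mk2)
      show "X \<in> P"
      proof (cases "c = 0")
        case True
        then have "a * d = 1" using det by simp
        then have "(a = 1 \<and> d = 1) \<or> (a = -1 \<and> d = -1)" by (simp add: zmult_eq_1_iff)
        then show ?thesis
        proof
          assume "a = 1 \<and> d = 1"
          then have "X = mat 1 ** U b" using Xe True by (simp add: U_def mat1_mk2)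
          then show ?thesis using Um[OF P1] by simp
        next
          assume "a = -1 \<and> d = -1"
          then have "X = mat 1 ** U (-1) ** L 1 ** U (-1) ** U (-1) ** L 1 ** U (-1) ** U (-b)"
            using Xe True by (simp add: U_def L_def mat1_mk2)
          then show ?thesis using Um[OF Lm[OF Um[OF Um[OF Lm[OF Um[OF P1]]]]]] Um by metis
        qed
      next
        case False
        show ?thesis
        proof (cases "\<bar>c\<bar> = 1")
          case True
          then have cc: "c * c = 1" by (metis abs_mult_self_eq mult.commute mult_1)
          define m where "m = (1 - d) * c"
          have "X ** U m ** L (-c) = mk2 (a + (a*m+b)*(-c)) (a*m+b) (c + (c*m+d)*(-c)) (c*m+d)"
            using Xe by (simp add: U_def L_def algebra_simps)
          moreover have "c*m + d = 1" unfolding m_def using cc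
            by (metis add.commute diff_add_cancel mult.commute mult.left_commute mult_1)
          ultimately have e: "X ** U m ** L (-c) = mk2 (a + (a*m+b)*(-c)) (a*m+b) 0 1" by simp
          have "X ** U m ** L (-c) \<in> SL2Z" using X by (simp add: SL2Z_mult)
          moreover have "nat \<bar>(X ** U m ** L (-c))$2$1\<bar> < n" using e n Xe False by simp
          ultimately have "X ** U m ** L (-c) \<in> P" using less by blast
          then show ?thesis by (rule bk)
        next
          case False2: False
          define m where "m = - (d div c)"
          define d' where "d' = c*m + d"
          have d'm: "d' = d mod c" unfolding d'_def m_def
            by (metis add.commute minus_mult_right mult.commute minus_div_mult_eq_mod diff_conv_add_uminus)
          have d'0: "d' \<noteq> 0"
          proof
            assume "d' = 0"
            then have "c dvd d" using d'm by (simp add: dvd_eq_mod_eq_0)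
            then have "c dvd a*d - b*c" by simp
            then have "c dvd 1" using det by simp
            then show False using False2 by simp
          qed
          have lt1: "\<bar>d'\<bar> < \<bar>c\<bar>" using d'm abs_mod_less[OF False] by simp
          define m' where "m' = - (c div d')"
          have c'm: "c + d' * m' = c mod d'" unfolding m'_def
            by (metis add.commute minus_mult_right mult.commute minus_div_mult_eq_mod diff_conv_add_uminus)
          have lt2: "\<bar>c + d' * m'\<bar> < \<bar>d'\<bar>" using c'm abs_mod_less[OF d'0] by simp
          have e: "(X ** U m ** L m')$2$1 = c + d' * m'"
            using Xe by (simp add: U_def L_def d'_def algebra_simps)
          have "X ** U m ** L m' \<in> SL2Z" using X by (simp add: SL2Z_mult)
          moreover have "nat \<bar>(X ** U m ** L m')$2$1\<bar> < n" using e n Xe lt1 lt2 by simp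
          ultimately have "X ** U m ** L m' \<in> P" using less by blast
          then show ?thesis by (rule bk)
        qed
      qed
    qed
  qed
  show ?thesis using main M by blast
qed

lemma coprime_shift:
  fixes c d :: int and N :: int
  assumes c0: "c \<noteq> 0" and cop3: "\<And>p. p dvd c \<Longrightarrow> p dvd d \<Longrightarrow> p dvd N \<Longrightarrow> is_unit p"
  shows "\<exists>t. coprime c (d + t * N)"
proof -
  define Ps where "Ps = {p::int. prime p \<and> p dvd c \<and> \<not> p dvd d}"
  have fin: "finite Ps"
  proof (rule finite_subset)
    show "Ps \<subseteq> {-\<bar>c\<bar>..\<bar>c\<bar>}"
    proof
      fix x assume "x \<in> Ps"
      then have "\<bar>x\<bar> \<le> \<bar>c\<bar>" using dvd_imp_le_int[OF c0] by (simp add: Ps_def)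
      then show "x \<in> {-\<bar>c\<bar>..\<bar>c\<bar>}" by auto
    qed
  qed simp
  define t where "t = \<Prod>Ps"
  have "coprime c (d + t * N)"
  proof (rule ccontr)
    assume nc: "\<not> coprime c (d + t * N)"
    have "gcd c (d + t * N) \<noteq> 0" using c0 by simp
    moreover have "\<not> is_unit (gcd c (d + t * N))" using nc is_unit_gcd by blast
    ultimately obtain p where p: "p dvd gcd c (d + t * N)" "prime p"
      using prime_divisor_exists by blast
    have pc: "p dvd c" and pd: "p dvd d + t * N" using p(1) by auto
    show False
    proof (cases "p dvd d")
      case True
      then have "p dvd t * N" using pd by (simp add: dvd_add_right_iff)
      then have "p dvd t \<or> p dvd N" using p(2) by (simp add: prime_dvd_mult_iff)
      then show False
      proof
        assume "p dvd t"
        then obtain q where q: "q \<in> Ps" "p dvd q" unfolding t_def using prime_dvd_prod_iff[OF fin p(2), of id] by auto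
        then have "p = q" using p(2) by (auto simp: Ps_def intro: primes_dvd_imp_eq)
        then show False using q True by (simp add: Ps_def)
      next
        assume "p dvd N"
        then have "is_unit p" using cop3 pc True by blast
        then show False using p(2) not_prime_unit by blast
      qed
    next
      case False
      then have "p \<in> Ps" using pc p(2) by (simp add: Ps_def)
      then have "p dvd t" unfolding t_def using fin by (simp add: dvd_prodI[of Ps p id, simplified])
      then have "p dvd t * N" by simp
      then have "p dvd d" using pd by (simp add: dvd_add_left_iff)
      then show False using False by simp
    qed
  qed
  then show ?thesis by blast
qed

lemma lift_SL2:
  assumes N: "N > 0" and det: "(a*d - b*c) mod int N = 1 mod int N"
  shows "\<exists>M\<in>SL2Z. mat_cong N M (mk2 a b c d)"
proof -
  define c1 where "c1 = (if c = 0 then int N else c)"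
  have c10: "c1 \<noteq> 0" using N by (simp add: c1_def)
  have c1m: "c1 mod int N = c mod int N" by (simp add: c1_def)
  have "(a*d - b*c1) mod int N = (a*d - b*c) mod int N"
    by (intro mod_diff_cong mod_mult_cong) (simp_all add: c1m)
  then have det1: "(a*d - b*c1) mod int N = 1 mod int N" using det by simp
  have cop3: "is_unit p" if "p dvd c1" "p dvd d" "p dvd int N" for p
  proof -
    have "int N dvd (a*d - b*c1) - 1" using det1 by (simp add: mod_eq_dvd_iff)
    then have h1: "p dvd (a*d - b*c1) - 1" using that(3) by (rule dvd_trans[rotated])
    have h2: "p dvd a*d - b*c1" using that(1,2) by simp
    have "p dvd (a*d - b*c1) - ((a*d - b*c1) - 1)" using dvd_diff[OF h2 h1] .
    then have "p dvd 1" by simp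
    then show ?thesis by simp
  qed
  obtain t where cop: "coprime c1 (d + t * int N)" using coprime_shift[OF c10 cop3] by blast
  define d1 where "d1 = d + t * int N"
  have d1m: "d1 mod int N = d mod int N" by (simp add: d1_def)
  obtain u v where uv: "u * c1 + v * d1 = gcd c1 d1" using bezout_int by blast
  have g1: "gcd c1 d1 = 1" using cop unfolding d1_def by simp
  define x where "x = v"
  define y where "y = - u"
  have xy: "x * d1 - y * c1 = 1" using uv g1 by (simp add: x_def y_def algebra_simps)
  define \<alpha> where "\<alpha> = a*d1 - b*c1 - 1"
  have "(a*d1 - b*c1) mod int N = (a*d - b*c1) mod int N"
    by (intro mod_diff_cong mod_mult_cong) (simp_all add: d1m)
  then have "(a*d1 - b*c1) mod int N = 1 mod int N" using det1 by simp
  then have adv: "int N dvd \<alpha>" unfolding \<alpha>_def by (simp add: mod_eq_dvd_iff)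
  define M where "M = mk2 (a - \<alpha>*x) (b - \<alpha>*y) c1 d1"
  have "(a - \<alpha>*x)*d1 - (b - \<alpha>*y)*c1 = a*d1 - b*c1 - \<alpha>*(x*d1 - y*c1)" by (simp add: algebra_simps)
  then have "(a - \<alpha>*x)*d1 - (b - \<alpha>*y)*c1 = 1" using xy by (simp add: \<alpha>_def)
  then have "M \<in> SL2Z" by (simp add: M_def SL2Z_mk2)
  moreover have "mat_cong N M (mk2 a b c d)"
  proof -
    have "(a - \<alpha>*x) mod int N = a mod int N" using adv by (simp add: mod_eq_dvd_iff)
    moreover have "(b - \<alpha>*y) mod int N = b mod int N" using adv by (simp add: mod_eq_dvd_iff)
    ultimately show ?thesis using c1m d1m by (simp add: M_def)
  qed
  ultimately show ?thesis by blast
qed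

lemma Gamma2_mult: "B \<in> Gamma2 \<Longrightarrow> X \<in> SL2Z \<Longrightarrow> mat_cong 2 X (mat 1) \<Longrightarrow> B ** X \<in> Gamma2"
  unfolding Gamma2_def using mat_cong_mult[of 2 B "mat 1" X "mat 1"] by (auto simp: SL2Z_mult)

lemma Gamma2_surj:
  assumes N: "odd N" and M: "M \<in> SL2Z"
  shows "\<exists>B\<in>Gamma2. mat_cong N B M"
proof -
  let ?P = "{M. \<exists>B\<in>Gamma2. mat_cong N B M}"
  have c2: "mat_cong 2 (U (e * (int N + 1))) (mat 1)" "mat_cong 2 (L (e * (int N + 1))) (mat 1)" for e
  proof -
    have "even (int N + 1)" using N by simp
    then obtain q where q: "int N + 1 = 2 * q" by (rule evenE)
    have "(e * (int N + 1)) mod 2 = 0" unfolding q by simp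
    then show "mat_cong 2 (U (e * (int N + 1))) (mat 1)" "mat_cong 2 (L (e * (int N + 1))) (mat 1)"
      by (simp_all add: U_def L_def mat1_mk2)
  qed
  have cN: "mat_cong N (U (e * (int N + 1))) (U e)" "mat_cong N (L (e * (int N + 1))) (L e)" for e
  proof -
    have "e * (int N + 1) = e + e * int N" by (simp add: algebra_simps)
    then have "(e * (int N + 1)) mod int N = e mod int N" by simp
    then show "mat_cong N (U (e * (int N + 1))) (U e)" "mat_cong N (L (e * (int N + 1))) (L e)"
      by (simp_all add: U_def L_def)
  qed
  have stepU: "X ** U e \<in> ?P" if XP: "X \<in> ?P" for X e
  proof -
    obtain B where B: "B \<in> Gamma2" "mat_cong N B X" using XP by blast
    have "B ** U (e * (int N + 1)) \<in> Gamma2" using Gamma2_mult[OF B(1) U_SL c2(1)] .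
    moreover have "mat_cong N (B ** U (e * (int N + 1))) (X ** U e)" using mat_cong_mult[OF B(2) cN(1)] .
    ultimately show ?thesis by blast
  qed
  have stepL: "X ** L e \<in> ?P" if XP: "X \<in> ?P" for X e
  proof -
    obtain B where B: "B \<in> Gamma2" "mat_cong N B X" using XP by blast
    have "B ** L (e * (int N + 1)) \<in> Gamma2" using Gamma2_mult[OF B(1) L_SL c2(2)] .
    moreover have "mat_cong N (B ** L (e * (int N + 1))) (X ** L e)" using mat_cong_mult[OF B(2) cN(2)] .
    ultimately show ?thesis by blast
  qed
  have "mat 1 \<in> ?P"
  proof -
    have "mat 1 \<in> Gamma2" by (simp add: Gamma2_def SL2Z_one)
    then show ?thesis by force
  qed
  then have "M \<in> ?P" using sl2_words[of ?P M] stepU stepL M by blast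
  then show ?thesis by blast
qed

definition Hs :: "nat \<Rightarrow> nat \<Rightarrow> mat2 set" where
  "Hs k N = {M \<in> SL2Z. \<exists>C\<in>Gamma2bar_lcs k. \<exists>A\<in>C. mat_cong N A M}"

lemma lcs_elem: "C \<in> Gamma2bar_lcs k \<Longrightarrow> A \<in> C \<Longrightarrow> C = cos2 A \<and> A \<in> SL2Z"
  using lcs_sub PSL_elem by blast

lemma Hs_cong: "M \<in> Hs k N \<Longrightarrow> M' \<in> SL2Z \<Longrightarrow> mat_cong N M M' \<Longrightarrow> M' \<in> Hs k N"
  unfolding Hs_def using mat_cong_trans by blast

lemma H1: "odd N \<Longrightarrow> M \<in> SL2Z \<Longrightarrow> M \<in> Hs (Suc 0) N"
  using Gamma2_surj[of N M] Gamma2bar_cos cos2_self unfolding Hs_def by fastforce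

lemma Hs_one: "k \<ge> 2 \<Longrightarrow> mat 1 \<in> Hs k N"
proof -
  assume k: "k \<ge> 2"
  have "cos2 (mat 1) \<in> Gamma2bar_lcs k"
    using subgroup.one_closed[OF lcs_subgroup[OF k]] by (simp add: PSL_one)
  then show ?thesis unfolding Hs_def using cos2_self SL2Z_one mat_cong_refl by blast
qed

lemma Hs_mult: "k \<ge> 2 \<Longrightarrow> M \<in> Hs k N \<Longrightarrow> M' \<in> Hs k N \<Longrightarrow> M ** M' \<in> Hs k N"
proof -
  assume k: "k \<ge> 2" and M: "M \<in> Hs k N" and M': "M' \<in> Hs k N"
  obtain C A where C: "C \<in> Gamma2bar_lcs k" "A \<in> C" "mat_cong N A M" "M \<in> SL2Z" using M by (auto simp: Hs_def)
  obtain C' A' where C': "C' \<in> Gamma2bar_lcs k" "A' \<in> C'" "mat_cong N A' M'" "M' \<in> SL2Z" using M' by (auto simp: Hs_def)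
  have e: "C = cos2 A" "A \<in> SL2Z" "C' = cos2 A'" "A' \<in> SL2Z" using lcs_elem C C' by blast+
  have "C \<otimes>\<^bsub>PSL2Z\<^esub> C' \<in> Gamma2bar_lcs k" using subgroup.m_closed[OF lcs_subgroup[OF k] C(1) C'(1)] .
  then have "cos2 (A ** A') \<in> Gamma2bar_lcs k" using e PSL_mult by simp
  moreover have "mat_cong N (A ** A') (M ** M')" using mat_cong_mult C(3) C'(3) .
  ultimately show ?thesis unfolding Hs_def using cos2_self SL2Z_mult C(4) C'(4) by blast
qed

lemma Hs_adj: "k \<ge> 2 \<Longrightarrow> M \<in> Hs k N \<Longrightarrow> adj2 M \<in> Hs k N"
proof -
  assume k: "k \<ge> 2" and M: "M \<in> Hs k N"
  obtain C A where C: "C \<in> Gamma2bar_lcs k" "A \<in> C" "mat_cong N A M" "M \<in> SL2Z" using M by (auto simp: Hs_def)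
  have e: "C = cos2 A" "A \<in> SL2Z" using lcs_elem C by blast+
  have "inv\<^bsub>PSL2Z\<^esub> C \<in> Gamma2bar_lcs k" using subgroup.m_inv_closed[OF lcs_subgroup[OF k] C(1)] .
  then have "cos2 (adj2 A) \<in> Gamma2bar_lcs k" using e PSL_inv by simp
  moreover have "mat_cong N (adj2 A) (adj2 M)" using mat_cong_adj C(3) .
  ultimately show ?thesis unfolding Hs_def using cos2_self SL2Z_adj C(4) by blast
qed

lemma comm_step:
  assumes k: "k \<ge> 1" and N: "odd N" and M: "M \<in> Hs k N" and X: "X \<in> SL2Z"
  shows "M ** X ** adj2 M ** adj2 X \<in> Hs (Suc k) N"
proof -
  obtain C A where C: "C \<in> Gamma2bar_lcs k" "A \<in> C" "mat_cong N A M" "M \<in> SL2Z" using M by (auto simp: Hs_def)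
  have e: "C = cos2 A" "A \<in> SL2Z" using lcs_elem C by blast+
  obtain B where B: "B \<in> Gamma2" "mat_cong N B X" using Gamma2_surj[OF N X] by blast
  have BS: "B \<in> SL2Z" using B by (simp add: Gamma2_def)
  have DB: "cos2 B \<in> Gamma2bar" using Gamma2bar_cos[OF B(1)] .
  obtain j where kj: "k = Suc j" using k by (cases k) auto
  let ?E = "C \<otimes>\<^bsub>PSL2Z\<^esub> cos2 B \<otimes>\<^bsub>PSL2Z\<^esub> inv\<^bsub>PSL2Z\<^esub> C \<otimes>\<^bsub>PSL2Z\<^esub> inv\<^bsub>PSL2Z\<^esub> (cos2 B)"
  have "?E \<in> Gamma2bar_lcs (Suc k)"
    unfolding kj Gamma2bar_lcs.simps comm_subgroup_def
    using C(1) DB kj by (intro generate.incl) blast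
  moreover have "?E = cos2 (A ** B ** adj2 A ** adj2 B)"
    using e BS by (simp add: PSL_inv PSL_mult SL2Z_mult SL2Z_adj)
  ultimately have "cos2 (A ** B ** adj2 A ** adj2 B) \<in> Gamma2bar_lcs (Suc k)" by simp
  moreover have "mat_cong N (A ** B ** adj2 A ** adj2 B) (M ** X ** adj2 M ** adj2 X)"
    by (intro mat_cong_mult mat_cong_adj C(3) B(2))
  moreover have "M ** X ** adj2 M ** adj2 X \<in> SL2Z" by (simp add: SL2Z_mult SL2Z_adj C(4) X)
  ultimately show ?thesis unfolding Hs_def using cos2_self by blast
qed

lemma chi_U: "chi (U j) = j mod 3" by (simp add: U_def chi4_def)
lemma chi_L1: "chi (L 1) = 2" by (simp add: L_def chi4_def)
lemma chi_Lm1: "chi (L (-1)) = 1" by (simp add: L_def chi4_def)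

definition Sm :: mat2 where "Sm = mk2 0 (-1) 1 0"

lemma Sm_SL: "Sm \<in> SL2Z" by (simp add: Sm_def SL2Z_mk2)
lemma chi_Sm: "chi Sm = 0" by (simp add: Sm_def chi4_def)

lemma modeq: "(x::int) = y + n * z \<Longrightarrow> x mod n = y mod n" by simp

lemma Gj:
  assumes k: "k \<ge> 1" and N: "odd N" and IH: "\<And>M. M \<in> SL2Z \<Longrightarrow> chi M = 0 \<Longrightarrow> M \<in> Hs k N"
  shows "U j ** L 1 ** U (1-j) \<in> Hs (Suc k) N"
proof -
  define X where "X = U j ** Sm ** U (-j)"
  have XS: "X \<in> SL2Z" by (simp add: X_def SL2Z_mult Sm_SL)
  have "chi X = ((j mod 3 + 0) mod 3 + (-j) mod 3) mod 3"
    by (simp add: X_def chi_SL_mult SL2Z_mult Sm_SL chi_U chi_Sm)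
  then have "chi X = 0" by presburger
  then have "X \<in> Hs k N" using IH XS by blast
  then have "X ** U (-1) ** adj2 X ** adj2 (U (-1)) \<in> Hs (Suc k) N" using comm_step[OF k N] by simp
  moreover have "X ** U (-1) ** adj2 X ** adj2 (U (-1)) = U j ** L 1 ** U (1-j)"
    by (simp add: X_def U_def L_def Sm_def algebra_simps)
  ultimately show ?thesis by simp
qed

lemma Tt:
  assumes k: "k \<ge> 1" and N: "odd N" and IH: "\<And>M. M \<in> SL2Z \<Longrightarrow> chi M = 0 \<Longrightarrow> M \<in> Hs k N"
  shows "U (3*t) \<in> Hs (Suc k) N"
proof -
  obtain m0 where "N = 2*m0 + 1" using N oddE by blast
  then have m: "int N = 2*int m0 + 1" by simp
  define m where "m = int m0"
  note m = m[folded m_def]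
  define n where "n = 2*m + 1"
  define h where "h = 2*m*m + 2*m + 1"
  define M0 where "M0 = mk2 2 n n h"
  have M0S: "M0 \<in> SL2Z" by (simp add: M0_def SL2Z_mk2 n_def h_def algebra_simps)
  have "chi M0 = 0"
  proof -
    define r where "r = m mod 3"
    have r: "r = 0 \<or> r = 1 \<or> r = 2" unfolding r_def by arith
    have "chi M0 = chi4 2 (2*r+1) (2*r+1) (2*r*r + 2*r + 1)"
      unfolding M0_def chi_mk2 n_def h_def
      by (intro chi4_cong mod_add_cong mod_mult_cong) (simp_all add: r_def)
    then show ?thesis using r by (auto simp: chi4_def)
  qed
  then have "M0 \<in> Hs k N" using IH M0S by blast
  then have c: "M0 ** U t ** adj2 M0 ** adj2 (U t) \<in> Hs (Suc k) N" using comm_step[OF k N] by simp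
  have e: "M0 ** U t ** adj2 M0 ** adj2 (U t) = mk2 (1 - 2*n*t) (3*t + 2*n*t*t) (-n*n*t) (1 + 2*n*t + n*n*t*t)"
    by (simp add: M0_def U_def h_def n_def algebra_simps power2_eq_square)
  have "mat_cong N (mk2 (1 - 2*n*t) (3*t + 2*n*t*t) (-n*n*t) (1 + 2*n*t + n*n*t*t)) (mk2 1 (3*t) 0 1)"
    unfolding mat_cong_mk2 m n_def[symmetric]
    by (intro conjI modeq[where z="-2*t"] modeq[where z="2*t*t"] modeq[where z="-n*t"] modeq[where z="2*t + n*t*t"];
        simp add: algebra_simps)
  then have "mat_cong N (M0 ** U t ** adj2 M0 ** adj2 (U t)) (U (3*t))" unfolding e by (simp add: U_def)
  then show ?thesis using Hs_cong[OF c] by simp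
qed

lemma main_hard:
  assumes N: "odd N"
  shows "k \<ge> 1 \<Longrightarrow> M \<in> SL2Z \<Longrightarrow> chi M = 0 \<Longrightarrow> M \<in> Hs k N"
proof (induction k arbitrary: M)
  case 0
  then show ?case by simp
next
  case (Suc k)
  show ?case
  proof (cases "k = 0")
    case True
    then show ?thesis using H1[OF N Suc.prems(2)] by simp
  next
    case False
    then have k: "k \<ge> 1" by simp
    have IH: "\<And>M. M \<in> SL2Z \<Longrightarrow> chi M = 0 \<Longrightarrow> M \<in> Hs k N" using Suc.IH k by blast
    have k2: "Suc k \<ge> 2" using k by simp
    let ?H = "Hs (Suc k) N"
    let ?P = "{M \<in> SL2Z. \<exists>j. M ** U (-j) \<in> ?H \<and> (chi M - j) mod 3 = 0}"
    have G: "U j ** L 1 ** U (1-j) \<in> ?H" for j using Gj[OF k N IH] .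
    have assoc: "(A::mat2) ** B ** C = A ** (B ** C)" for A B C by (simp add: matrix_mul_assoc)
    have "M \<in> ?P"
    proof (rule sl2_words)
      show "mat 1 \<in> ?P"
      proof -
        have "mat 1 ** U (-0) = mat 1" by (simp add: U_def mat1_mk2)
        then have "mat 1 ** U (-0) \<in> ?H" using Hs_one[OF k2, of N] by simp
        moreover have "(chi (mat 1) - 0) mod 3 = 0" using chi_one by simp
        ultimately show ?thesis using SL2Z_one by (intro CollectI conjI exI)
      qed
      show "M \<in> SL2Z" using Suc.prems by simp
    next
      fix X assume XP: "X \<in> ?P"
      then have X1: "X \<in> SL2Z" and "\<exists>j. X ** U (-j) \<in> ?H \<and> (chi X - j) mod 3 = 0"
        by (simp_all only: mem_Collect_eq)
      then obtain j where X2: "X ** U (-j) \<in> ?H" "(chi X - j) mod 3 = 0" by (elim exE conjE)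
      note X = X1 X2
      have cX: "0 \<le> chi X" "chi X < 3" by (rule chi_range)+
      show "X ** U 1 \<in> ?P"
      proof -
        have "X ** U 1 ** U (-(j+1)) = X ** U (-j)" unfolding assoc by (simp add: U_def algebra_simps)
        then have m: "X ** U 1 ** U (-(j+1)) \<in> ?H" using X(2) by simp
        have c: "chi (X ** U 1) = (chi X + 1 mod 3) mod 3" by (simp add: chi_SL_mult X chi_U)
        have r: "(chi (X ** U 1) - (j+1)) mod 3 = 0" unfolding c using X(3) cX by presburger
        show ?thesis using m r SL2Z_mult[OF X(1) U_SL, of 1] by (intro CollectI conjI exI)
      qed
      show "X ** U (-1) \<in> ?P"
      proof -
        have "X ** U (-1) ** U (-(j-1)) = X ** U (-j)" unfolding assoc by (simp add: U_def algebra_simps)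
        then have m: "X ** U (-1) ** U (-(j-1)) \<in> ?H" using X(2) by simp
        have c: "chi (X ** U (-1)) = (chi X + (-1) mod 3) mod 3" by (simp add: chi_SL_mult X chi_U)
        have r: "(chi (X ** U (-1)) - (j-1)) mod 3 = 0" unfolding c using X(3) cX by presburger
        show ?thesis using m r SL2Z_mult[OF X(1) U_SL, of "-1"] by (intro CollectI conjI exI)
      qed
      show "X ** L 1 \<in> ?P"
      proof -
        have "X ** L 1 ** U (-(j-1)) = X ** U (-j) ** (U j ** L 1 ** U (1-j))"
          unfolding assoc by (simp add: U_def L_def algebra_simps)
        moreover have "X ** U (-j) ** (U j ** L 1 ** U (1-j)) \<in> ?H" using Hs_mult[OF k2 X(2) G] .
        ultimately have m: "X ** L 1 ** U (-(j-1)) \<in> ?H" by simp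
        have c: "chi (X ** L 1) = (chi X + 2) mod 3" by (simp add: chi_SL_mult X chi_L1)
        have r: "(chi (X ** L 1) - (j-1)) mod 3 = 0" unfolding c using X(3) cX by presburger
        show ?thesis using m r SL2Z_mult[OF X(1) L_SL, of 1] by (intro CollectI conjI exI)
      qed
      show "X ** L (-1) \<in> ?P"
      proof -
        have "X ** L (-1) ** U (-(j+1)) = X ** U (-j) ** adj2 (U (j+1) ** L 1 ** U (1-(j+1)))"
          unfolding assoc by (simp add: U_def L_def algebra_simps)
        moreover have "X ** U (-j) ** adj2 (U (j+1) ** L 1 ** U (1-(j+1))) \<in> ?H"
          using Hs_mult[OF k2 X(2) Hs_adj[OF k2 G]] .
        ultimately have m: "X ** L (-1) ** U (-(j+1)) \<in> ?H" by simp
        have c: "chi (X ** L (-1)) = (chi X + 1) mod 3" by (simp add: chi_SL_mult X chi_Lm1)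
        have r: "(chi (X ** L (-1)) - (j+1)) mod 3 = 0" unfolding c using X(3) cX by presburger
        show ?thesis using m r SL2Z_mult[OF X(1) L_SL, of "-1"] by (intro CollectI conjI exI)
      qed
    qed
    then have "\<exists>j. M ** U (-j) \<in> ?H \<and> (chi M - j) mod 3 = 0" by (simp only: mem_Collect_eq)
    then obtain j where j: "M ** U (-j) \<in> ?H" "(chi M - j) mod 3 = 0" by (elim exE conjE)
    then have "j mod 3 = 0" using Suc.prems(3) by presburger
    define t where "t = j div 3"
    have t: "j = 3 * t" unfolding t_def using \<open>j mod 3 = 0\<close> by presburger
    have eq: "M ** U (-j) ** U (3*t) = M" unfolding assoc t by (simp add: U_def mat1_mk2[symmetric])
    have "M ** U (-j) ** U (3*t) \<in> ?H" using Hs_mult[OF k2 j(1) Tt[OF k N IH]] .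
    then show ?thesis unfolding eq .
  qed
qed

lemma easy:
  assumes k: "k \<ge> 2" and C: "C \<in> Gamma2bar_lcs k" and A: "A \<in> C"
  shows "chi A = 0"
proof -
  let ?K = "{C \<in> carrier PSL2Z. \<forall>A\<in>C. chi A = 0}"
  have cos_chi: "cos2 B \<in> ?K" if "B \<in> SL2Z" "chi B = 0" for B
    using that cos2_in_PSL by (auto simp: cos2_def chi_neg)
  have Kelem: "C = cos2 B \<and> B \<in> SL2Z \<and> chi B = 0" if "C \<in> ?K" "B \<in> C" for C B
    using that PSL_elem by blast
  have sg: "subgroup ?K PSL2Z"
  proof (rule PSL.subgroupI)
    show "?K \<subseteq> carrier PSL2Z" by blast
    show "?K \<noteq> {}" using cos_chi[OF SL2Z_one chi_one] by blast
  next
    fix C assume C: "C \<in> ?K"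
    obtain B where "B \<in> C" using C by (auto simp: PSL_carrier cos2_def)
    then have B: "C = cos2 B" "B \<in> SL2Z" "chi B = 0" using Kelem C by blast+
    have "cos2 (adj2 B) \<in> ?K" using B by (intro cos_chi SL2Z_adj) (simp_all add: chi_adj)
    then show "inv\<^bsub>PSL2Z\<^esub> C \<in> ?K" using B by (simp add: PSL_inv)
  next
    fix C D assume C: "C \<in> ?K" and D: "D \<in> ?K"
    obtain B where "B \<in> C" using C by (auto simp: PSL_carrier cos2_def)
    then have B: "C = cos2 B" "B \<in> SL2Z" "chi B = 0" using Kelem C by blast+
    obtain B' where "B' \<in> D" using D by (auto simp: PSL_carrier cos2_def)
    then have B': "D = cos2 B'" "B' \<in> SL2Z" "chi B' = 0" using Kelem D by blast+
    have "cos2 (B ** B') \<in> ?K" using B B' by (intro cos_chi SL2Z_mult) (simp_all add: chi_SL_mult)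
    then show "C \<otimes>\<^bsub>PSL2Z\<^esub> D \<in> ?K" using B B' by (simp add: PSL_mult)
  qed
  obtain j where kj: "k = Suc (Suc j)" using k by (metis add_2_eq_Suc le_Suc_ex)
  have gens: "(\<Union>a\<in>Gamma2bar_lcs (Suc j). \<Union>b\<in>Gamma2bar.
      {a \<otimes>\<^bsub>PSL2Z\<^esub> b \<otimes>\<^bsub>PSL2Z\<^esub> inv\<^bsub>PSL2Z\<^esub> a \<otimes>\<^bsub>PSL2Z\<^esub> inv\<^bsub>PSL2Z\<^esub> b}) \<subseteq> ?K"
  proof
    fix x assume "x \<in> (\<Union>a\<in>Gamma2bar_lcs (Suc j). \<Union>b\<in>Gamma2bar.
      {a \<otimes>\<^bsub>PSL2Z\<^esub> b \<otimes>\<^bsub>PSL2Z\<^esub> inv\<^bsub>PSL2Z\<^esub> a \<otimes>\<^bsub>PSL2Z\<^esub> inv\<^bsub>PSL2Z\<^esub> b})"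
    then obtain a b where a: "a \<in> Gamma2bar_lcs (Suc j)" and b: "b \<in> Gamma2bar"
      and x: "x = a \<otimes>\<^bsub>PSL2Z\<^esub> b \<otimes>\<^bsub>PSL2Z\<^esub> inv\<^bsub>PSL2Z\<^esub> a \<otimes>\<^bsub>PSL2Z\<^esub> inv\<^bsub>PSL2Z\<^esub> b"
      by blast
    have ac: "a \<in> carrier PSL2Z" using a lcs_sub by blast
    have bc: "b \<in> carrier PSL2Z" using b Gamma2bar_sub by blast
    obtain A0 where A0: "A0 \<in> SL2Z" "a = cos2 A0" using ac by (auto simp: PSL_carrier)
    obtain B0 where B0: "B0 \<in> SL2Z" "b = cos2 B0" using bc by (auto simp: PSL_carrier)
    have "a \<otimes>\<^bsub>PSL2Z\<^esub> b \<otimes>\<^bsub>PSL2Z\<^esub> inv\<^bsub>PSL2Z\<^esub> a \<otimes>\<^bsub>PSL2Z\<^esub> inv\<^bsub>PSL2Z\<^esub> b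
          = cos2 (A0 ** B0 ** adj2 A0 ** adj2 B0)"
      using A0 B0 by (simp add: PSL_inv PSL_mult SL2Z_mult SL2Z_adj)
    moreover have "cos2 (A0 ** B0 ** adj2 A0 ** adj2 B0) \<in> ?K"
      using A0 B0 by (intro cos_chi) (simp_all add: SL2Z_mult SL2Z_adj chi_comm)
    ultimately show "x \<in> ?K" unfolding x by simp
  qed
  have "Gamma2bar_lcs k \<subseteq> ?K"
    unfolding kj Gamma2bar_lcs.simps comm_subgroup_def
    by (rule PSL.generate_subgroup_incl[OF gens sg])
  then show ?thesis using C A by blast
qed

theorem proposition13:
  fixes k :: nat
  assumes "k \<ge> 2"
  shows "\<forall>g\<in>SL2_Zodd. in_closure_PSL2_Zodd (Gamma2bar_lcs k) g \<longleftrightarrow> in_Dhat_odd g"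
proof
  fix g assume g: "g \<in> SL2_Zodd"
  have compat: "\<And>m n. odd m \<Longrightarrow> odd n \<Longrightarrow> m dvd n \<Longrightarrow> mat_cong m (g n) (g m)"
    and detg: "\<And>n. odd n \<Longrightarrow> det (g n) mod int n = 1 mod int n"
    using g by (auto simp: SL2_Zodd_def)
  have det3: "det (g 3) mod 3 = 1" using detg[of 3] by simp
  have D3g: "chi (g 3) = 0 \<longleftrightarrow> in_Dhat_odd g"
    using D3_iff[of "g 3 $ 1 $ 1" "g 3 $ 2 $ 2" "g 3 $ 1 $ 2" "g 3 $ 2 $ 1"] det3 mat2_eta[of "g 3"]
    unfolding in_Dhat_odd_def chi_def det_2 by metis
  show "in_closure_PSL2_Zodd (Gamma2bar_lcs k) g \<longleftrightarrow> in_Dhat_odd g"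
  proof
    assume cl: "in_closure_PSL2_Zodd (Gamma2bar_lcs k) g"
    then obtain C A where CA: "C \<in> Gamma2bar_lcs k" "A \<in> C" "mat_cong 3 A (g 3)"
      unfolding in_closure_PSL2_Zodd_def by (metis odd_numeral)
    have "chi A = 0" using easy[OF assms CA(1,2)] .
    then have "chi (g 3) = 0" using mat_cong_chi[OF CA(3)] by simp
    then show "in_Dhat_odd g" using D3g by simp
  next
    assume D: "in_Dhat_odd g"
    then have c3: "chi (g 3) = 0" using D3g by simp
    show "in_closure_PSL2_Zodd (Gamma2bar_lcs k) g"
      unfolding in_closure_PSL2_Zodd_def
    proof (intro allI impI)
      fix n :: nat assume n: "odd n"
      define N where "N = 3 * n"
      have N: "odd N" "N > 0" using n odd_pos by (auto simp: N_def)
      have dN: "det (g N) mod int N = 1 mod int N" using detg[OF N(1)] .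
      obtain M where M: "M \<in> SL2Z" "mat_cong N M (g N)"
        using lift_SL2[OF N(2), of "g N $ 1 $ 1" "g N $ 2 $ 2" "g N $ 1 $ 2" "g N $ 2 $ 1"] dN
        mat2_eta[of "g N"] unfolding det_2 by metis
      have "mat_cong 3 M (g N)" using mat_cong_dvd[OF _ M(2)] by (simp add: N_def)
      moreover have "mat_cong 3 (g N) (g 3)" using compat[of 3 N] N by (simp add: N_def)
      ultimately have "mat_cong 3 M (g 3)" by (rule mat_cong_trans)
      then have "chi M = 0" using mat_cong_chi c3 by simp
      then have "M \<in> Hs k N" using main_hard[OF N(1)] assms M(1) by simp
      then obtain C A where CA: "C \<in> Gamma2bar_lcs k" "A \<in> C" "mat_cong N A M" by (auto simp: Hs_def)
      have "mat_cong N A (g N)" using mat_cong_trans[OF CA(3) M(2)] .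
      then have "mat_cong n A (g N)" by (rule mat_cong_dvd[rotated]) (simp add: N_def)
      moreover have "mat_cong n (g N) (g n)" using compat[of n N] N n by (simp add: N_def)
      ultimately have "mat_cong n A (g n)" by (rule mat_cong_trans)
      then show "\<exists>C\<in>Gamma2bar_lcs k. \<exists>A\<in>C. mat_cong n A (g n)" using CA by blast
    qed
  qed
qed

end
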